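(* Let $q>1$, $\alpha>0$, $0<\theta<1$, $1\le r<\infty$, and let $K_d$ be a nonnegative decreasing function on $(0,1)$. Then, with constants depending only on $q,\alpha,\theta,r$, $$\int_0^1\Bigl[t^{1-\theta}(1-\log t)^{\frac{\alpha(1-\theta)}{q}}\sup_{t<s<1}(1-\log s)^{-\frac{\alpha}{q}}K_d(s)\Bigr]^r\frac{dt}{t}\ \approx\ \int_0^1\Bigl[t^{1-\theta}(1-\log t)^{-\frac{\alpha\theta}{q}}K_d(t)\Bigr]^r\frac{dt}{t}.$$
   Context: $\log$ is the natural logarithm. $A\approx B$ means $c^{-1}B\le A\le cB$ with $c$ independent of $K_d$. *)

theory Defs
  imports "HOL-Analysis.Analysis"
begin

end

theory Submission
  imports Defs
begin


lemma log_powr_bound: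
  fixes x g p :: real
  assumes "x \<ge> 1" "g > 0" "p > 0"
  shows "(1 + ln x) powr p \<le> (1 + p/g) powr p * x powr g"
proof -
  have x0: "x > 0" using assms by simp
  have y1: "x powr (g/p) \<ge> 1" using assms by (simp add: ge_one_powr_ge_zero)
  have "ln (x powr (g/p)) \<le> x powr (g/p)"
    using ln_le_minus_one[of "x powr (g/p)"] y1 x0 by simp
  hence "(g/p) * ln x \<le> x powr (g/p)" using x0 by (simp add: ln_powr mult.commute)
  hence "ln x \<le> (p/g) * x powr (g/p)" using assms by (simp add: field_simps)
  moreover have "(1 + p/g) * x powr (g/p) = x powr (g/p) + (p/g) * x powr (g/p)"
    by (simp add: algebra_simps)
  ultimately have "1 + ln x \<le> (1 + p/g) * x powr (g/p)" using y1 by linarith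
  moreover have "0 \<le> 1 + ln x" using assms by simp
  ultimately have "(1 + ln x) powr p \<le> ((1 + p/g) * x powr (g/p)) powr p"
    using assms by (intro powr_mono2) auto
  also have "\<dots> = (1 + p/g) powr p * x powr g"
    using assms x0 by (simp add: powr_mult powr_powr)
  finally show ?thesis .
qed



lemma pointwise_inner:
  fixes b p u t :: real
  assumes "b>0" "p>0" "0<u" "u<1" "0<t" "t < exp 1 * u"
  shows "t powr (b-1) * (1 - ln t) powr p \<le>
     ((1 - ln u) powr p * (1 + p/(b/2)) powr p * (exp 1 * u) powr (b/2)) * t powr (b/2 - 1)"
proof -
  define v where "v = exp 1 * u"
  define x where "x = v / t"
  have v0: "v > 0" using assms by (simp add: v_def)
  have x1: "x \<ge> 1" using assms by (simp add: x_def v_def le_divide_eq)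
  have lnu: "1 - ln u \<ge> 1" using assms by simp
  have lnx: "ln x \<ge> 0" using x1 by simp
  have "ln x = 1 + ln u - ln t" using assms by (simp add: x_def v_def ln_div ln_mult)
  moreover have "1 * ln x \<le> (1 - ln u) * ln x" using mult_right_mono[OF lnu lnx] .
  moreover have "(1 - ln u) * (1 + ln x) = (1 - ln u) + (1 - ln u) * ln x" by (simp add: algebra_simps)
  ultimately have "1 - ln t \<le> (1 - ln u) * (1 + ln x)" by linarith
  moreover have "0 \<le> 1 - ln t" using assms
    using \<open>ln x = 1 + ln u - ln t\<close> lnu lnx by linarith
  ultimately have "(1 - ln t) powr p \<le> ((1 - ln u) * (1 + ln x)) powr p"
    using assms by (intro powr_mono2) auto
  also have "\<dots> = (1 - ln u) powr p * (1 + ln x) powr p"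
    using lnu lnx by (simp add: powr_mult)
  also have "\<dots> \<le> (1 - ln u) powr p * ((1 + p/(b/2)) powr p * x powr (b/2))"
    using log_powr_bound[OF x1, of "b/2" p] assms lnu
    by (intro mult_left_mono) auto
  finally have A: "(1 - ln t) powr p \<le> (1 - ln u) powr p * ((1 + p/(b/2)) powr p * x powr (b/2))" .
  have "t powr (b-1) * (1 - ln t) powr p \<le> t powr (b-1) * ((1 - ln u) powr p * ((1 + p/(b/2)) powr p * x powr (b/2)))"
    using A by (intro mult_left_mono) auto
  also have "\<dots> = ((1 - ln u) powr p * (1 + p/(b/2)) powr p * v powr (b/2)) * (t powr (b-1) / t powr (b/2))"
    using assms v0 by (simp add: x_def powr_divide)
  also have "t powr (b-1) / t powr (b/2) = t powr (b/2 - 1)"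
    using assms by (simp add: powr_diff[symmetric])
  finally show ?thesis by (simp add: v_def)
qed


lemma inner_bound:
  fixes b p u :: real
  assumes "b>0" "p>0" "0<u" "u<1"
  shows "(\<integral>\<^sup>+t. (if 0<t \<and> t<1 \<and> t < exp 1 * u then ennreal (t powr (b-1) * (1 - ln t) powr p) else 0) \<partial>lborel)
     \<le> ennreal (((1 - ln u) powr p * (1 + p/(b/2)) powr p * (exp 1 * u) powr (b/2)) * ((exp 1 * u) powr (b/2) / (b/2)))"
proof -
  define M where "M = (1 - ln u) powr p * (1 + p/(b/2)) powr p * (exp 1 * u) powr (b/2)"
  define v where "v = exp 1 * u"
  have M0: "M \<ge> 0" by (simp add: M_def)
  have v0: "v \<ge> 0" using assms by (simp add: v_def)
  have "(\<integral>\<^sup>+t. (if 0<t \<and> t<1 \<and> t < exp 1 * u then ennreal (t powr (b-1) * (1 - ln t) powr p) else 0) \<partial>lborel)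
     \<le> (\<integral>\<^sup>+t. ennreal (indicator {0..v} t * (M * t powr (b/2 - 1))) \<partial>lborel)"
  proof (rule nn_integral_mono)
    fix t :: real
    show "(if 0<t \<and> t<1 \<and> t < exp 1 * u then ennreal (t powr (b-1) * (1 - ln t) powr p) else 0)
       \<le> ennreal (indicator {0..v} t * (M * t powr (b/2 - 1)))"
    proof (cases "0<t \<and> t<1 \<and> t < exp 1 * u")
      case True
      then have "t \<in> {0..v}" by (auto simp: v_def)
      then show ?thesis using True pointwise_inner[OF assms, of t]
        by (auto simp: M_def intro!: ennreal_leI)
    next
      case False
      then show ?thesis by (simp only: if_False) simp
    qed
  qed
  also have "\<dots> = ennreal (M * (v powr (b/2 - 1 + 1) / (b/2 - 1 + 1)))"
  proof -
    have "((\<lambda>t. M * t powr (b/2 - 1)) has_integral M * (v powr (b/2 - 1 + 1) / (b/2 - 1 + 1))) {0..v}"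
      using has_integral_powr_from_0[of "b/2 - 1" v] assms v0 by (intro has_integral_mult_right) auto
    from nn_integral_has_integral_lebesgue[OF _ this] M0 show ?thesis by (simp)
  qed
  finally show ?thesis by (simp add: M_def v_def)
qed


lemma g_le:
  fixes a r s u :: real and K :: "real \<Rightarrow> real"
  assumes "a>0" "r\<ge>1" "0<s" "s<1" "s/exp 1 < u" "u \<le> s"
    and Kn: "\<forall>t\<in>{0<..<1}. 0 \<le> K t"
    and Km: "\<forall>s t. 0 < s \<longrightarrow> s \<le> t \<longrightarrow> t < 1 \<longrightarrow> K t \<le> K s"
  shows "((1 - ln s) powr (-a) * K s) powr r \<le> 2 powr (a*r) * (((1 - ln u) powr (-a) * K u) powr r)"
proof -
  have u0: "0 < u" using assms by (smt (verit) divide_pos_pos exp_gt_zero)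
  have ws: "1 - ln s \<ge> 1" using assms by simp
  have wu: "1 - ln u \<ge> 1" using assms u0 by simp
  have "ln (s / exp 1) < ln u" using assms u0 by simp
  hence "1 - ln u < 2 - ln s" using assms by (simp add: ln_div)
  moreover have "2 * (1 - ln s) = 2 - 2 * ln s" by simp
  ultimately have wle: "1 - ln u \<le> 2 * (1 - ln s)" using ws by linarith
  have Ks: "0 \<le> K s" using Kn assms by auto
  have Kle: "K s \<le> K u" using Km assms u0 by auto
  have "(1 - ln u) powr a \<le> (2 * (1 - ln s)) powr a" using wle wu assms by (intro powr_mono2) auto
  also have "\<dots> = 2 powr a * (1 - ln s) powr a" using ws by (intro powr_mult)
  finally have pa: "(1 - ln u) powr a \<le> 2 powr a * (1 - ln s) powr a" .
  have "(1 - ln s) powr (-a) = 1 / (1 - ln s) powr a" using ws by (simp add: powr_minus_divide)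
  also have "\<dots> \<le> 2 powr a / (1 - ln u) powr a"
    using pa ws wu by (simp add: field_simps)
  also have "\<dots> = 2 powr a * (1 - ln u) powr (-a)" using wu by (simp add: powr_minus_divide)
  finally have pw: "(1 - ln s) powr (-a) \<le> 2 powr a * (1 - ln u) powr (-a)" .
  have "(1 - ln s) powr (-a) * K s \<le> 2 powr a * (1 - ln u) powr (-a) * K u"
    using pw Kle Ks by (intro mult_mono) auto
  hence "((1 - ln s) powr (-a) * K s) powr r \<le> (2 powr a * (1 - ln u) powr (-a) * K u) powr r"
    using Ks assms by (intro powr_mono2) auto
  also have "\<dots> = 2 powr (a*r) * (((1 - ln u) powr (-a) * K u) powr r)"
    using Ks Kle by (simp add: powr_mult powr_powr mult.assoc)
  finally show ?thesis .
qed


lemma sup_props: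
  fixes a t :: real and K :: "real \<Rightarrow> real"
  assumes "a>0" "0<t" "t<1"
    and Kn: "\<forall>t\<in>{0<..<1}. 0 \<le> K t"
    and Km: "\<forall>s t. 0 < s \<longrightarrow> s \<le> t \<longrightarrow> t < 1 \<longrightarrow> K t \<le> K s"
  shows "bdd_above ((\<lambda>s. (1 - ln s) powr (-a) * K s) ` {t<..<1})"
    and "\<And>s. s \<in> {t<..<1} \<Longrightarrow> 0 \<le> (1 - ln s) powr (-a) * K s"
    and "\<And>s. s \<in> {t<..<1} \<Longrightarrow> (1 - ln s) powr (-a) * K s \<le> (SUP s\<in>{t<..<1}. (1 - ln s) powr (-a) * K s)"
    and "0 \<le> (SUP s\<in>{t<..<1}. (1 - ln s) powr (-a) * K s)"
proof -
  have b: "(1 - ln s) powr (-a) * K s \<le> K t" if "s \<in> {t<..<1}" for s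
  proof -
    have w: "1 - ln s \<ge> 1" using that assms by simp
    have "(1 - ln s) powr (-a) \<le> 1" using w assms by (simp add: powr_le_one_le ge_one_powr_ge_zero powr_minus_divide)
    moreover have "0 \<le> K s" "K s \<le> K t" using Kn Km that assms by auto
    ultimately have "(1 - ln s) powr (-a) * K s \<le> 1 * K s"
      by (intro mult_right_mono) auto
    then show ?thesis using \<open>K s \<le> K t\<close> by linarith
  qed
  show bd: "bdd_above ((\<lambda>s. (1 - ln s) powr (-a) * K s) ` {t<..<1})"
    using b by (intro bdd_aboveI2) auto
  show nn: "0 \<le> (1 - ln s) powr (-a) * K s" if "s \<in> {t<..<1}" for s
    using Kn that assms by auto
  show le: "(1 - ln s) powr (-a) * K s \<le> (SUP s\<in>{t<..<1}. (1 - ln s) powr (-a) * K s)" if "s \<in> {t<..<1}" for s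
    using bd that by (rule cSUP_upper[rotated])
  have "(t+1)/2 \<in> {t<..<1}" using assms by auto
  then show "0 \<le> (SUP s\<in>{t<..<1}. (1 - ln s) powr (-a) * K s)"
    using nn le by (meson order_trans)
qed


lemma sup_bound:
  fixes a r t :: real and K :: "real \<Rightarrow> real"
  assumes "a>0" "r\<ge>1" "0<t" "t<1"
    and Kn: "\<forall>t\<in>{0<..<1}. 0 \<le> K t"
    and Km: "\<forall>s t. 0 < s \<longrightarrow> s \<le> t \<longrightarrow> t < 1 \<longrightarrow> K t \<le> K s"
  shows "ennreal ((SUP s\<in>{t<..<1}. (1 - ln s) powr (-a) * K s) powr r)
     \<le> ennreal (1 / (2 powr (-(a*r)) * (1 - exp (-1))))
        * (\<integral>\<^sup>+u. (if t < exp 1 * u \<and> u < 1 then ennreal (((1 - ln u) powr (-a) * K u) powr r / u) else 0) \<partial>lborel)"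
proof -
  define g where "g s = (1 - ln s) powr (-a) * K s" for s
  define c0 where "c0 = 2 powr (-(a*r)) * (1 - exp (-1))"
  define \<Phi> where "\<Phi> = (\<integral>\<^sup>+u. (if t < exp 1 * u \<and> u < 1 then ennreal (((1 - ln u) powr (-a) * K u) powr r / u) else 0) \<partial>lborel)"
  have e1: "exp (-1::real) < 1" by simp
  have c0: "c0 > 0" unfolding c0_def using e1 by simp
  have low: "ennreal (c0 * g s powr r) \<le> \<Phi>" if s: "s \<in> {t<..<1}" for s
  proof -
    have s0: "0 < s" "s < 1" using s assms by auto
    have se: "s / exp 1 \<le> s" using s0 by (simp add: divide_le_eq)
    have gn: "0 \<le> g s" using sup_props(2)[OF assms(1,3,4) Kn Km s] by (simp add: g_def)
    have "(\<integral>\<^sup>+u. ennreal (2 powr (-(a*r)) * g s powr r / s) * indicator {s/exp 1<..<s} u \<partial>lborel) \<le> \<Phi>"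
      unfolding \<Phi>_def
    proof (rule nn_integral_mono)
      fix u :: real
      show "ennreal (2 powr (-(a*r)) * g s powr r / s) * indicator {s/exp 1<..<s} u
        \<le> (if t < exp 1 * u \<and> u < 1 then ennreal (((1 - ln u) powr (-a) * K u) powr r / u) else 0)"
      proof (cases "u \<in> {s/exp 1<..<s}")
        case True
        have u0: "0 < u" using True s0 by (smt (verit) divide_pos_pos exp_gt_zero greaterThanLessThan_iff)
        have c1: "t < exp 1 * u" using True s by (simp add: divide_less_eq mult.commute)
        have c2: "u < 1" using True s0 by simp
        have G: "g s powr r \<le> 2 powr (a*r) * (((1 - ln u) powr (-a) * K u) powr r)"
          using g_le[OF assms(1,2) s0, of u K] True Kn Km by (simp add: g_def)
        have "2 powr (-(a*r)) * g s powr r \<le> ((1 - ln u) powr (-a) * K u) powr r"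
          using G by (simp add: powr_minus field_simps)
        moreover have "0 \<le> ((1 - ln u) powr (-a) * K u) powr r" by simp
        ultimately have "2 powr (-(a*r)) * g s powr r / s \<le> ((1 - ln u) powr (-a) * K u) powr r / u"
          using u0 True by (meson frac_le greaterThanLessThan_iff less_eq_real_def)
        then show ?thesis using True c1 c2 by (auto intro: ennreal_leI)
      qed simp
    qed
    also have "(\<integral>\<^sup>+u. ennreal (2 powr (-(a*r)) * g s powr r / s) * indicator {s/exp 1<..<s} u \<partial>lborel)
       = ennreal (2 powr (-(a*r)) * g s powr r / s) * ennreal (s - s / exp 1)"
      using se by (simp add: nn_integral_cmult_indicator)
    also have "\<dots> = ennreal (2 powr (-(a*r)) * g s powr r / s * (s - s / exp 1))"
      using s0 se by (subst ennreal_mult) auto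
    also have "2 powr (-(a*r)) * g s powr r / s * (s - s / exp 1) = c0 * g s powr r"
      unfolding c0_def using s0 by (simp add: field_simps exp_minus)
    finally show ?thesis .
  qed
  show ?thesis
  proof (cases "\<Phi> = top")
    case True
    have "1 / c0 > 0" using c0 by simp
    then show ?thesis using True by (simp add: \<Phi>_def[symmetric] c0_def[symmetric] ennreal_mult_top)
  next
    case False
    then obtain x where x: "\<Phi> = ennreal x" "0 \<le> x" using ennreal_cases by (metis top_neq_ennreal)
    have gx: "g s \<le> (x / c0) powr (1/r)" if s: "s \<in> {t<..<1}" for s
    proof -
      have gn: "0 \<le> g s" using sup_props(2)[OF assms(1,3,4) Kn Km s] by (simp add: g_def)
      have "c0 * g s powr r \<le> x" using low[OF s] x by (simp add: ennreal_le_iff2) auto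
      hence "g s powr r \<le> x / c0" using c0 by (simp add: field_simps)
      hence "(g s powr r) powr (1/r) \<le> (x / c0) powr (1/r)" using assms by (intro powr_mono2) auto
      thus ?thesis using gn assms by (simp add: powr_powr)
    qed
    have "(SUP s\<in>{t<..<1}. g s) \<le> (x / c0) powr (1/r)"
      using assms gx by (intro cSUP_least) auto
    moreover have "0 \<le> (SUP s\<in>{t<..<1}. g s)" using sup_props(4)[OF assms(1,3,4) Kn Km] by (simp add: g_def)
    ultimately have "(SUP s\<in>{t<..<1}. g s) powr r \<le> ((x / c0) powr (1/r)) powr r"
      using assms by (intro powr_mono2) auto
    also have "\<dots> = x / c0" using x c0 assms by (simp add: powr_powr)
    finally have "(SUP s\<in>{t<..<1}. g s) powr r \<le> x / c0" .
    hence "ennreal ((SUP s\<in>{t<..<1}. g s) powr r) \<le> ennreal (1/c0) * ennreal x"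
      using c0 x by (simp add: ennreal_mult'[symmetric] ennreal_leI)
    then show ?thesis using x by (simp add: g_def c0_def \<Phi>_def)
  qed
qed


lemma main_meas:
  fixes q \<alpha> \<theta> r :: real and K :: "real \<Rightarrow> real"
  assumes "q > 1" and "\<alpha> > 0" and "0 < \<theta>" and "\<theta> < 1" and "1 \<le> r"
    and Kmeas[measurable]: "K \<in> borel_measurable borel"
    and Kn: "\<forall>t\<in>{0<..<1}. 0 \<le> K t"
    and Km: "\<forall>s t. 0 < s \<longrightarrow> s \<le> t \<longrightarrow> t < 1 \<longrightarrow> K t \<le> K s"
  defines "A \<equiv> (\<integral>\<^sup>+ t\<in>{0<..<1}.
                   ennreal ((t powr (1 - \<theta>) * (1 - ln t) powr (\<alpha> * (1 - \<theta>) / q)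
                      * (SUP s\<in>{t<..<1}. (1 - ln s) powr (- \<alpha> / q) * K s)) powr r / t) \<partial>lborel)"
    and "B \<equiv> (\<integral>\<^sup>+ t\<in>{0<..<1}.
                   ennreal ((t powr (1 - \<theta>) * (1 - ln t) powr (- \<alpha> * \<theta> / q) * K t) powr r / t) \<partial>lborel)"
  shows "B \<le> ennreal (2 powr ((1-\<theta>)*r)) * A"
proof -
  define S where "S t = (SUP s\<in>{t<..<1}. (1 - ln s) powr (- \<alpha> / q) * K s)" for t
  define fA where "fA t = (t powr (1 - \<theta>) * (1 - ln t) powr (\<alpha> * (1 - \<theta>) / q) * S t) powr r / t" for t
  define fB where "fB t = (t powr (1 - \<theta>) * (1 - ln t) powr (- \<alpha> * \<theta> / q) * K t) powr r / t" for t
  define b where "b = (1-\<theta>)*r"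
  have eqa: "-(\<alpha>/q) = -\<alpha>/q" by simp
  have a0: "\<alpha>/q > 0" using assms by simp
  have b0: "b > 0" using assms by (simp add: b_def)
  have A_eq: "A = (\<integral>\<^sup>+t. ennreal (fA t) * indicator {0<..<1} t \<partial>lborel)"
    unfolding A_def fA_def S_def ..
  have B_eq: "B = (\<integral>\<^sup>+t. ennreal (fB t) * indicator {0<..<1} t \<partial>lborel)"
    unfolding B_def fB_def ..
  have fBm[measurable]: "(\<lambda>t. ennreal (fB t) * indicator {0<..<1} t) \<in> borel_measurable borel"
    unfolding fB_def by measurable
  note sp = sup_props[of "\<alpha>/q", unfolded eqa, OF a0 _ _ Kn Km, folded S_def]
  have pw: "ennreal (2 powr (1 - b)) * (ennreal (fB (0 + 2 * x)) * indicator {0<..<1} (0 + 2 * x))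
      \<le> ennreal (fA x) * indicator {0<..<1} x" for x
  proof (cases "0 < 2*x \<and> 2*x < 1")
    case True
    define s where "s = 2*x"
    have x0: "0 < x" "x < 1" "x < s" "0 < s" "s < 1" using True by (auto simp: s_def)
    have ws: "1 - ln s \<ge> 1" using x0 by simp
    have wx: "1 - ln s \<le> 1 - ln x" using x0 by simp
    have Ks: "0 \<le> K s" using Kn x0 by auto
    have Sx: "(1 - ln s) powr (- \<alpha> / q) * K s \<le> S x" using sp(3)[of x s] x0 by auto
    have "2 powr (\<theta>-1) * s powr (1-\<theta>) = (2 powr (\<theta>-1) * 2 powr (1-\<theta>)) * x powr (1-\<theta>)"
      using x0 by (simp add: s_def powr_mult)
    also have "2 powr (\<theta>-1) * 2 powr (1-\<theta>) = (1::real)" by (simp add: powr_add[symmetric])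
    finally have xs: "x powr (1-\<theta>) = 2 powr (\<theta>-1) * s powr (1-\<theta>)" by simp
    have we: "(1 - ln s) powr (\<alpha> * (1 - \<theta>) / q) \<le> (1 - ln x) powr (\<alpha> * (1 - \<theta>) / q)"
      using ws wx assms by (intro powr_mono2) auto
    have gs0: "0 \<le> (1 - ln s) powr (- \<alpha> / q) * K s" using Ks by simp
    have "(1 - ln s) powr (\<alpha> * (1 - \<theta>) / q) * (1 - ln s) powr (- \<alpha> / q) = (1 - ln s) powr (- \<alpha> * \<theta> / q)"
    proof -
      have "\<alpha> * (1 - \<theta>) / q + (- \<alpha> / q) = - \<alpha> * \<theta> / q" using assms by (simp add: field_simps)
      then show ?thesis by (simp add: powr_add[symmetric])
    qed
    hence "2 powr (\<theta>-1) * (s powr (1 - \<theta>) * (1 - ln s) powr (- \<alpha> * \<theta> / q) * K s)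
        = x powr (1-\<theta>) * (1 - ln s) powr (\<alpha> * (1 - \<theta>) / q) * ((1 - ln s) powr (- \<alpha> / q) * K s)"
      using xs by (simp add: algebra_simps)
    also have "\<dots> \<le> x powr (1-\<theta>) * (1 - ln x) powr (\<alpha> * (1 - \<theta>) / q) * S x"
      using we Sx gs0 by (intro mult_mono) auto
    finally have base: "2 powr (\<theta>-1) * (s powr (1 - \<theta>) * (1 - ln s) powr (- \<alpha> * \<theta> / q) * K s)
        \<le> x powr (1-\<theta>) * (1 - ln x) powr (\<alpha> * (1 - \<theta>) / q) * S x" .
    have bB0: "0 \<le> s powr (1 - \<theta>) * (1 - ln s) powr (- \<alpha> * \<theta> / q) * K s" using Ks by simp
    have "(2 powr (\<theta>-1) * (s powr (1 - \<theta>) * (1 - ln s) powr (- \<alpha> * \<theta> / q) * K s)) powr r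
        \<le> (x powr (1-\<theta>) * (1 - ln x) powr (\<alpha> * (1 - \<theta>) / q) * S x) powr r"
      using base bB0 assms by (intro powr_mono2) auto
    hence "2 powr ((\<theta>-1)*r) * (s powr (1 - \<theta>) * (1 - ln s) powr (- \<alpha> * \<theta> / q) * K s) powr r
        \<le> (x powr (1-\<theta>) * (1 - ln x) powr (\<alpha> * (1 - \<theta>) / q) * S x) powr r"
      using bB0 by (simp add: powr_mult powr_powr)
    hence "2 powr ((\<theta>-1)*r) * (s powr (1 - \<theta>) * (1 - ln s) powr (- \<alpha> * \<theta> / q) * K s) powr r / x
        \<le> (x powr (1-\<theta>) * (1 - ln x) powr (\<alpha> * (1 - \<theta>) / q) * S x) powr r / x"
      using x0 by (simp add: divide_right_mono)
    moreover have "2 powr ((\<theta>-1)*r) * (s powr (1 - \<theta>) * (1 - ln s) powr (- \<alpha> * \<theta> / q) * K s) powr r / x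
        = 2 powr (1 - b) * fB s"
    proof -
      have e: "1 - b = 1 + (\<theta>-1)*r" by (simp add: b_def algebra_simps)
      have "(2::real) powr (1 - b) = 2 powr 1 * 2 powr ((\<theta>-1)*r)" unfolding e by (rule powr_add)
      hence "2 powr ((\<theta>-1)*r) * 2 = (2::real) powr (1 - b)" by simp
      then show ?thesis using x0 by (simp add: fB_def s_def field_simps)
    qed
    ultimately have "2 powr (1 - b) * fB s \<le> fA x" by (simp add: fA_def)
    moreover have "0 \<le> fB s" using bB0 x0 by (simp add: fB_def)
    ultimately show ?thesis using x0 True
      by (simp add: s_def ennreal_mult[symmetric] ennreal_leI)
  next
    case False
    then show ?thesis by auto
  qed
  define I where "I = (\<integral>\<^sup>+x. ennreal (fB (0 + 2 * x)) * indicator {0<..<1} (0 + 2 * x) \<partial>lborel)"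
  have BI: "B = ennreal 2 * I"
    unfolding B_eq I_def using nn_integral_real_affine[OF fBm, of 2 0] by simp
  have "ennreal (2 powr (1 - b)) * I
      = (\<integral>\<^sup>+x. ennreal (2 powr (1 - b)) * (ennreal (fB (0 + 2 * x)) * indicator {0<..<1} (0 + 2 * x)) \<partial>lborel)"
    unfolding I_def by (rule nn_integral_cmult[symmetric]) measurable
  also have "\<dots> \<le> A" unfolding A_eq by (rule nn_integral_mono) (rule pw)
  finally have AI: "ennreal (2 powr (1 - b)) * I \<le> A" .
  have "B = ennreal (2 powr b) * (ennreal (2 powr (1 - b)) * I)"
  proof -
    have "(2::real) powr b * 2 powr (1 - b) = 2" by (simp add: powr_add[symmetric])
    then show ?thesis unfolding BI by (simp add: mult.assoc[symmetric] ennreal_mult[symmetric])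
  qed
  also have "\<dots> \<le> ennreal (2 powr b) * A" using AI by (rule mult_left_mono) simp
  finally show ?thesis by (simp add: b_def)
qed


lemma ident1:
  fixes t e b r p w S :: real
  assumes "t > 0" "w \<ge> 1" "S \<ge> 0" "e * r = p" "(1-\<theta>)*r = b"
  shows "(t powr (1 - \<theta>) * w powr e * S) powr r / t = t powr (b - 1) * w powr p * S powr r"
proof -
  have "(t powr (1 - \<theta>) * w powr e * S) powr r = (t powr (1 - \<theta>)) powr r * (w powr e) powr r * S powr r"
    using assms by (simp add: powr_mult)
  also have "\<dots> = t powr b * w powr p * S powr r"
    using assms by (simp add: powr_powr)
  finally show ?thesis using assms by (simp add: powr_diff)
qed

lemma ident2:
  fixes u b r p w k a c :: real
  assumes "u > 0" "w \<ge> 1" "k \<ge> 0" "(1-\<theta>)*r = b" "p - a * r = c * r"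
  shows "u powr b * w powr p * ((w powr (-a) * k) powr r / u) = (u powr (1 - \<theta>) * w powr c * k) powr r / u"
proof -
  have "(u powr (1 - \<theta>) * w powr c * k) powr r = (u powr (1 - \<theta>)) powr r * (w powr c) powr r * k powr r"
    using assms by (simp add: powr_mult)
  also have "\<dots> = u powr b * w powr (c * r) * k powr r"
    using assms by (simp add: powr_powr)
  also have "w powr (c * r) = w powr p * w powr (-a * r)"
    using assms by (simp add: powr_add[symmetric])
  finally have R: "(u powr (1 - \<theta>) * w powr c * k) powr r = u powr b * w powr p * w powr (-a * r) * k powr r"
    by simp
  have "(w powr (-a) * k) powr r = w powr (-a * r) * k powr r"
    using assms by (simp add: powr_mult powr_powr)
  then show ?thesis using R by simp
qed


lemma main_meas2:
  fixes q \<alpha> \<theta> r :: real and K :: "real \<Rightarrow> real"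
  assumes "q > 1" and "\<alpha> > 0" and "0 < \<theta>" and "\<theta> < 1" and "1 \<le> r"
    and Kmeas[measurable]: "K \<in> borel_measurable borel"
    and Kn: "\<forall>t\<in>{0<..<1}. 0 \<le> K t"
    and Km: "\<forall>s t. 0 < s \<longrightarrow> s \<le> t \<longrightarrow> t < 1 \<longrightarrow> K t \<le> K s"
  defines "A \<equiv> (\<integral>\<^sup>+ t\<in>{0<..<1}.
                   ennreal ((t powr (1 - \<theta>) * (1 - ln t) powr (\<alpha> * (1 - \<theta>) / q)
                      * (SUP s\<in>{t<..<1}. (1 - ln s) powr (- \<alpha> / q) * K s)) powr r / t) \<partial>lborel)"
    and "B \<equiv> (\<integral>\<^sup>+ t\<in>{0<..<1}.
                   ennreal ((t powr (1 - \<theta>) * (1 - ln t) powr (- \<alpha> * \<theta> / q) * K t) powr r / t) \<partial>lborel)"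
  shows "A \<le> ennreal (1 / (2 powr (-(\<alpha>/q*r)) * (1 - exp (-1))) *
      ((1 + (\<alpha>*(1-\<theta>)/q*r)/(((1-\<theta>)*r)/2)) powr (\<alpha>*(1-\<theta>)/q*r) * exp 1 powr ((1-\<theta>)*r) / (((1-\<theta>)*r)/2))) * B"
proof -
  define a where "a = \<alpha>/q"
  define b where "b = (1-\<theta>)*r"
  define p where "p = \<alpha>*(1-\<theta>)/q*r"
  define C1 where "C1 = 1 / (2 powr (-(a*r)) * (1 - exp (-1::real)))"
  define C2 where "C2 = (1 + p/(b/2)) powr p * exp 1 powr b / (b/2)"
  define S where "S t = (SUP s\<in>{t<..<1}. (1 - ln s) powr (- \<alpha> / q) * K s)" for t
  define fA where "fA t = (t powr (1 - \<theta>) * (1 - ln t) powr (\<alpha> * (1 - \<theta>) / q) * S t) powr r / t" for t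
  define fB where "fB t = (t powr (1 - \<theta>) * (1 - ln t) powr (- \<alpha> * \<theta> / q) * K t) powr r / t" for t
  define h where "h t = t powr (b-1) * (1 - ln t) powr p" for t :: real
  define \<phi> where "\<phi> u = ((1 - ln u) powr (- \<alpha> / q) * K u) powr r / u" for u
  define F where "F t u = (if 0<t \<and> t<1 \<and> t < exp 1 * u \<and> u < 1 then ennreal (h t) * ennreal (\<phi> u) else 0)" for t u
  have eqa: "-(\<alpha>/q) = -\<alpha>/q" by simp
  have a0: "a > 0" using assms by (simp add: a_def)
  have b0: "b > 0" using assms by (simp add: b_def)
  have p0: "p > 0" using assms by (simp add: p_def)
  have e1: "exp (-1::real) < 1" by simp
  have C10: "C1 \<ge> 0" unfolding C1_def using e1 by simp
  have C20: "C2 \<ge> 0" unfolding C2_def using b0 p0 by simp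
  have A_eq: "A = (\<integral>\<^sup>+t. ennreal (fA t) * indicator {0<..<1} t \<partial>lborel)"
    unfolding A_def fA_def S_def ..
  have B_eq: "B = (\<integral>\<^sup>+t. ennreal (fB t) * indicator {0<..<1} t \<partial>lborel)"
    unfolding B_def fB_def ..
  have fBm[measurable]: "(\<lambda>t. ennreal (fB t) * indicator {0<..<1} t) \<in> borel_measurable borel"
    unfolding fB_def by measurable
  have Fm[measurable]: "case_prod F \<in> borel_measurable (lborel \<Otimes>\<^sub>M lborel)"
    unfolding F_def h_def \<phi>_def by measurable
  note sp = sup_props[of "\<alpha>/q", unfolded eqa, OF a0[unfolded a_def] _ _ Kn Km, folded S_def]
  have step1: "ennreal (fA t) * indicator {0<..<1} t \<le> ennreal C1 * (\<integral>\<^sup>+u. F t u \<partial>lborel)" for t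
  proof (cases "t \<in> {0<..<1}")
    case True
    have t0: "0 < t" "t < 1" using True by auto
    have S0: "0 \<le> S t" using sp(4) t0 by auto
    have "fA t = h t * S t powr r"
      unfolding fA_def h_def using t0 S0 assms
      by (intro ident1) (auto simp: p_def b_def)
    hence "ennreal (fA t) = ennreal (h t) * ennreal (S t powr r)"
      using t0 by (simp add: h_def ennreal_mult)
    also have "\<dots> \<le> ennreal (h t) * (ennreal C1 * (\<integral>\<^sup>+u. (if t < exp 1 * u \<and> u < 1 then ennreal (\<phi> u) else 0) \<partial>lborel))"
    proof (rule mult_left_mono)
      show "ennreal (S t powr r) \<le> ennreal C1 * (\<integral>\<^sup>+u. (if t < exp 1 * u \<and> u < 1 then ennreal (\<phi> u) else 0) \<partial>lborel)"
        unfolding \<phi>_def C1_def a_def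
        by (rule sup_bound[of "\<alpha>/q" r t K, unfolded eqa, folded S_def]) (use a0 assms(5) t0 Kn Km in \<open>auto simp: a_def\<close>)
    qed simp
    also have "\<dots> = ennreal C1 * (ennreal (h t) * (\<integral>\<^sup>+u. (if t < exp 1 * u \<and> u < 1 then ennreal (\<phi> u) else 0) \<partial>lborel))"
      by (simp add: algebra_simps)
    also have "ennreal (h t) * (\<integral>\<^sup>+u. (if t < exp 1 * u \<and> u < 1 then ennreal (\<phi> u) else 0) \<partial>lborel)
       = (\<integral>\<^sup>+u. ennreal (h t) * (if t < exp 1 * u \<and> u < 1 then ennreal (\<phi> u) else 0) \<partial>lborel)"
      by (rule nn_integral_cmult[symmetric]) (unfold \<phi>_def, measurable)
    also have "\<dots> = (\<integral>\<^sup>+u. F t u \<partial>lborel)"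
      using t0 by (intro nn_integral_cong) (simp add: F_def)
    finally show ?thesis using True by simp
  qed simp
  have step4: "(\<integral>\<^sup>+t. F t u \<partial>lborel) \<le> ennreal C2 * (ennreal (fB u) * indicator {0<..<1} u)" for u
  proof (cases "u \<in> {0<..<1}")
    case True
    have u0: "0 < u" "u < 1" using True by auto
    have fBeq: "u powr b * (1 - ln u) powr p * \<phi> u = fB u"
    proof -
      have c: "p - \<alpha>/q * r = (- \<alpha> * \<theta> / q) * r" unfolding p_def using assms(1) by (simp add: field_simps)
      have w1: "1 - ln u \<ge> 1" using u0 by simp
      have k0: "K u \<ge> 0" using Kn u0 by simp
      show ?thesis unfolding \<phi>_def fB_def
        using ident2[OF u0(1) w1 k0 b_def[symmetric] c, unfolded eqa] .
    qed
    have "(\<integral>\<^sup>+t. F t u \<partial>lborel) = (\<integral>\<^sup>+t. (if 0<t \<and> t<1 \<and> t < exp 1 * u then ennreal (h t) else 0) * ennreal (\<phi> u) \<partial>lborel)"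
      using u0 by (intro nn_integral_cong) (simp add: F_def)
    also have "\<dots> = (\<integral>\<^sup>+t. (if 0<t \<and> t<1 \<and> t < exp 1 * u then ennreal (h t) else 0) \<partial>lborel) * ennreal (\<phi> u)"
      by (rule nn_integral_multc) (unfold h_def, measurable)
    also have "\<dots> \<le> ennreal (((1 - ln u) powr p * (1 + p/(b/2)) powr p * (exp 1 * u) powr (b/2)) * ((exp 1 * u) powr (b/2) / (b/2))) * ennreal (\<phi> u)"
      unfolding h_def using inner_bound[OF b0 p0 u0] by (intro mult_right_mono) auto
    also have "((1 - ln u) powr p * (1 + p/(b/2)) powr p * (exp 1 * u) powr (b/2)) * ((exp 1 * u) powr (b/2) / (b/2))
        = C2 * (u powr b * (1 - ln u) powr p)"
    proof -
      have "(exp 1 * u) powr (b/2) * (exp 1 * u) powr (b/2) = (exp 1 * u) powr (b/2 + b/2)"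
        by (rule powr_add[symmetric])
      also have "\<dots> = exp 1 powr b * u powr b"
        using u0 by (simp add: powr_mult)
      finally have "(exp 1 * u) powr (b/2) * (exp 1 * u) powr (b/2) = exp 1 powr b * u powr b" .
      then show ?thesis unfolding C2_def by (simp add: field_simps)
    qed
    also have "ennreal (C2 * (u powr b * (1 - ln u) powr p)) * ennreal (\<phi> u) = ennreal C2 * ennreal (fB u)"
      using C20 u0 fBeq[symmetric] by (simp add: \<phi>_def ennreal_mult[symmetric] mult.assoc)
    finally have X: "(\<integral>\<^sup>+t. F t u \<partial>lborel) \<le> ennreal C2 * ennreal (fB u)" .
    have "indicator {0<..<1} u = (1::ennreal)" using True by (rule indicator_simps(1))
    then show ?thesis using X by (simp only: mult_1_right)
  next
    case False
    have "F t u = 0" for t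
    proof (cases "0 < t \<and> t < exp 1 * u")
      case True
      then have "0 < exp 1 * u" by linarith
      then have "u > 0" by (simp add: zero_less_mult_iff)
      then have "u \<ge> 1" using False by auto
      then show ?thesis by (simp add: F_def)
    qed (auto simp: F_def)
    then show ?thesis by simp
  qed
  have "A \<le> (\<integral>\<^sup>+t. ennreal C1 * (\<integral>\<^sup>+u. F t u \<partial>lborel) \<partial>lborel)"
    unfolding A_eq by (rule nn_integral_mono) (rule step1)
  also have "\<dots> = ennreal C1 * (\<integral>\<^sup>+t. (\<integral>\<^sup>+u. F t u \<partial>lborel) \<partial>lborel)"
    by (rule nn_integral_cmult) measurable
  also have "(\<integral>\<^sup>+t. (\<integral>\<^sup>+u. F t u \<partial>lborel) \<partial>lborel) = (\<integral>\<^sup>+u. (\<integral>\<^sup>+t. F t u \<partial>lborel) \<partial>lborel)"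
    by (rule lborel_pair.Fubini'[symmetric]) (rule Fm)
  also have "\<dots> \<le> (\<integral>\<^sup>+u. ennreal C2 * (ennreal (fB u) * indicator {0<..<1} u) \<partial>lborel)"
    by (rule nn_integral_mono) (rule step4)
  also have "\<dots> = ennreal C2 * B"
    unfolding B_eq by (rule nn_integral_cmult) measurable
  finally have "A \<le> ennreal C1 * (ennreal C2 * B)" by (simp add: mult_left_mono)
  also have "\<dots> = ennreal (C1 * C2) * B" using C10 C20 by (simp add: ennreal_mult mult.assoc)
  finally show ?thesis by (simp add: C1_def C2_def a_def b_def p_def)
qed


theorem proposition3p1:
  fixes q \<alpha> \<theta> r :: real
  assumes "q > 1" and "\<alpha> > 0" and "0 < \<theta>" and "\<theta> < 1" and "1 \<le> r"
  shows "\<exists>c::real. c > 0 \<and>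
    (\<forall>K :: real \<Rightarrow> real.
       (\<forall>t\<in>{0<..<1}. 0 \<le> K t) \<and>
       (\<forall>s t. 0 < s \<longrightarrow> s \<le> t \<longrightarrow> t < 1 \<longrightarrow> K t \<le> K s) \<longrightarrow>
       (let A = (\<integral>\<^sup>+ t\<in>{0<..<1}.
                   ennreal ((t powr (1 - \<theta>) * (1 - ln t) powr (\<alpha> * (1 - \<theta>) / q)
                      * (SUP s\<in>{t<..<1}. (1 - ln s) powr (- \<alpha> / q) * K s)) powr r / t) \<partial>lborel);
            B = (\<integral>\<^sup>+ t\<in>{0<..<1}.
                   ennreal ((t powr (1 - \<theta>) * (1 - ln t) powr (- \<alpha> * \<theta> / q) * K t) powr r / t) \<partial>lborel)
        in A \<le> ennreal c * B \<and> B \<le> ennreal c * A))"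
proof -
  define C where "C = 1 / (2 powr (-(\<alpha>/q*r)) * (1 - exp (-1))) *
      ((1 + (\<alpha>*(1-\<theta>)/q*r)/(((1-\<theta>)*r)/2)) powr (\<alpha>*(1-\<theta>)/q*r) * exp 1 powr ((1-\<theta>)*r) / (((1-\<theta>)*r)/2))"
  define c where "c = max (2 powr ((1-\<theta>)*r)) C"
  have c0: "c > 0" unfolding c_def by (simp add: less_max_iff_disj)
  show ?thesis
  proof (intro exI[of _ c] conjI allI impI c0)
    fix K :: "real \<Rightarrow> real"
    assume H: "(\<forall>t\<in>{0<..<1}. 0 \<le> K t) \<and> (\<forall>s t. 0 < s \<longrightarrow> s \<le> t \<longrightarrow> t < 1 \<longrightarrow> K t \<le> K s)"
    define K' where "K' u = (if u \<in> {0<..<1} then K u else 0)" for u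
    have "mono_on {0<..<1} (\<lambda>u. - K u)"
      using H by (intro mono_onI) auto
    hence "(\<lambda>u. - K u) \<in> borel_measurable (restrict_space borel {0<..<1})"
      by (rule borel_measurable_mono_on_fnc)
    hence "(\<lambda>u. - (- K u)) \<in> borel_measurable (restrict_space borel {0<..<1})"
      by measurable
    hence "K \<in> borel_measurable (restrict_space borel {0<..<1})" by simp
    hence Km: "K' \<in> borel_measurable borel"
      unfolding K'_def by (subst (asm) measurable_restrict_space_iff) auto
    have Kn': "\<forall>t\<in>{0<..<1}. 0 \<le> K' t" using H by (simp add: K'_def)
    have Km': "\<forall>s t. 0 < s \<longrightarrow> s \<le> t \<longrightarrow> t < 1 \<longrightarrow> K' t \<le> K' s" using H by (simp add: K'_def)
    have eqA: "(\<integral>\<^sup>+ t\<in>{0<..<1}.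
                   ennreal ((t powr (1 - \<theta>) * (1 - ln t) powr (\<alpha> * (1 - \<theta>) / q)
                      * (SUP s\<in>{t<..<1}. (1 - ln s) powr (- \<alpha> / q) * K s)) powr r / t) \<partial>lborel)
       = (\<integral>\<^sup>+ t\<in>{0<..<1}.
                   ennreal ((t powr (1 - \<theta>) * (1 - ln t) powr (\<alpha> * (1 - \<theta>) / q)
                      * (SUP s\<in>{t<..<1}. (1 - ln s) powr (- \<alpha> / q) * K' s)) powr r / t) \<partial>lborel)"
    proof (intro nn_integral_cong)
      fix t :: real
      show "ennreal ((t powr (1 - \<theta>) * (1 - ln t) powr (\<alpha> * (1 - \<theta>) / q)
                      * (SUP s\<in>{t<..<1}. (1 - ln s) powr (- \<alpha> / q) * K s)) powr r / t) * indicator {0<..<1} t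
          = ennreal ((t powr (1 - \<theta>) * (1 - ln t) powr (\<alpha> * (1 - \<theta>) / q)
                      * (SUP s\<in>{t<..<1}. (1 - ln s) powr (- \<alpha> / q) * K' s)) powr r / t) * indicator {0<..<1} t"
      proof (cases "t \<in> {0<..<1}")
        case True
        have "(SUP s\<in>{t<..<1}. (1 - ln s) powr (- \<alpha> / q) * K s) = (SUP s\<in>{t<..<1}. (1 - ln s) powr (- \<alpha> / q) * K' s)"
          using True by (intro SUP_cong) (auto simp: K'_def)
        then show ?thesis by simp
      qed simp
    qed
    have eqB: "(\<integral>\<^sup>+ t\<in>{0<..<1}.
                   ennreal ((t powr (1 - \<theta>) * (1 - ln t) powr (- \<alpha> * \<theta> / q) * K t) powr r / t) \<partial>lborel)
       = (\<integral>\<^sup>+ t\<in>{0<..<1}.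
                   ennreal ((t powr (1 - \<theta>) * (1 - ln t) powr (- \<alpha> * \<theta> / q) * K' t) powr r / t) \<partial>lborel)"
      by (intro nn_integral_cong) (auto simp: K'_def indicator_def)
    note M1 = main_meas[OF assms Km Kn' Km']
    note M2 = main_meas2[OF assms Km Kn' Km', folded C_def]
    have cC: "ennreal C \<le> ennreal c" and c2: "ennreal (2 powr ((1-\<theta>)*r)) \<le> ennreal c"
      unfolding c_def by (auto intro!: ennreal_leI)
    show "let A = (\<integral>\<^sup>+ t\<in>{0<..<1}.
                   ennreal ((t powr (1 - \<theta>) * (1 - ln t) powr (\<alpha> * (1 - \<theta>) / q)
                      * (SUP s\<in>{t<..<1}. (1 - ln s) powr (- \<alpha> / q) * K s)) powr r / t) \<partial>lborel);
            B = (\<integral>\<^sup>+ t\<in>{0<..<1}.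
                   ennreal ((t powr (1 - \<theta>) * (1 - ln t) powr (- \<alpha> * \<theta> / q) * K t) powr r / t) \<partial>lborel)
        in A \<le> ennreal c * B \<and> B \<le> ennreal c * A"
      unfolding Let_def eqA eqB
      using order_trans[OF M1 mult_right_mono[OF c2]] order_trans[OF M2 mult_right_mono[OF cC]]
      by auto
  qed
qed

end
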